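(* Let $A\in\mathbb R^{n\times n}$ be symmetric, $C\in\mathbb R^{n\times n}$ symmetric positive semidefinite, $\xi\sim N(0,C)$. For every integer $N\ge1$, \[ \mathbf E\big(\langle\xi,A\xi\rangle-R_1\big)^N=\sum_{m=1}^N 2^{N-m}\sum_{\mathbf k\in J_0(m,N)}R^{\mathbf k}\,c(\mathbf k). \]
   Context: $R_j=\mathrm{Tr}\,(AC)^j$ (so $R_1=\mathbf E\langle\xi,A\xi\rangle$); for $\mathbf k=(\mathbf k_1,\dots,\mathbf k_m)$, $R^{\mathbf k}=\prod_{j=1}^m R_{\mathbf k_j}$ and $s_j(\mathbf k)=\mathbf k_1+\dots+\mathbf k_j$ ($s_0=0$). $J_0(m,N)$ is the set of $\mathbf k\in\{1,2,\dots\}^m$ with $s_m(\mathbf k)=N$ and no entry equal to $1$. For $\mathbf k\in J_0(m,N)$, $c(\mathbf k)=\dfrac{(N-1)!}{\prod_{j=2}^{m}\big(N-s_{j-1}(\mathbf k)\big)}$ (empty product $=1$). *)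

theory Defs
  imports "HOL-Probability.Probability"
begin

fun mat_pow :: "real^'n^'n \<Rightarrow> nat \<Rightarrow> real^'n^'n" where
  "mat_pow M 0 = mat 1"
| "mat_pow M (Suc j) = M ** mat_pow M j"

definition R :: "real^'n^'n \<Rightarrow> real^'n^'n \<Rightarrow> nat \<Rightarrow> real" where
  "R A C j = trace (mat_pow (A ** C) j)"

definition psd :: "real^'n^'n \<Rightarrow> bool" where
  "psd C \<longleftrightarrow> transpose C = C \<and> (\<forall>x. 0 \<le> x \<bullet> (C *v x))"

(* xi is a centred Gaussian random vector with covariance C: every linear functional
   u.xi is N(0, u^T C u) (degenerate = a.s. 0 when the variance vanishes) *)
definition gaussian_vec :: "'a measure \<Rightarrow> ('a \<Rightarrow> real^'n) \<Rightarrow> real^'n^'n \<Rightarrow> bool" where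
  "gaussian_vec M \<xi> C \<longleftrightarrow> prob_space M \<and> \<xi> \<in> borel_measurable M \<and>
     (\<forall>u. (u \<bullet> (C *v u) > 0 \<longrightarrow>
              distributed M lborel (\<lambda>\<omega>. u \<bullet> \<xi> \<omega>) (normal_density 0 (sqrt (u \<bullet> (C *v u)))))
         \<and> (u \<bullet> (C *v u) = 0 \<longrightarrow> (AE \<omega> in M. u \<bullet> \<xi> \<omega> = 0)))"

(* J_0(m,N): compositions of N into m parts, each part \<ge> 2 (entries k_1..k_m = k!0..k!(m-1)) *)
definition J0 :: "nat \<Rightarrow> nat \<Rightarrow> nat list set" where
  "J0 m N = {k. length k = m \<and> (\<forall>x\<in>set k. 2 \<le> x) \<and> sum_list k = N}"

definition psum :: "nat list \<Rightarrow> nat \<Rightarrow> nat" where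
  "psum k j = sum_list (take j k)"

definition cc :: "nat \<Rightarrow> nat list \<Rightarrow> real" where
  "cc N k = fact (N - 1) / (\<Prod>j\<in>{2..length k}. (real N - real (psum k (j - 1))))"

definition Rk :: "real^'n^'n \<Rightarrow> real^'n^'n \<Rightarrow> nat list \<Rightarrow> real" where
  "Rk A C k = (\<Prod>j<length k. R A C (k ! j))"

end

theory Submission
  imports Defs
begin

definition gm :: "nat \<Rightarrow> real \<Rightarrow> real" where
  "gm k s = (if even k then fact k / (2^(k div 2) * fact (k div 2)) * s^(k div 2) else 0)"

lemma gauss_mom:
  assumes g: "gaussian_vec M \<xi> C" and p: "psd C"
  shows "integrable M (\<lambda>\<omega>. (u \<bullet> \<xi> \<omega>)^k) \<and>
         prob_space.expectation M (\<lambda>\<omega>. (u \<bullet> \<xi> \<omega>)^k) = gm k (u \<bullet> (C *v u))"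
proof -
  interpret prob_space M using g by (simp add: gaussian_vec_def)
  have meas: "\<xi> \<in> borel_measurable M" using g by (simp add: gaussian_vec_def)
  have s0: "0 \<le> u \<bullet> (C *v u)" using p by (simp add: psd_def)
  show ?thesis
  proof (cases "u \<bullet> (C *v u) = 0")
    case True
    then have ae: "AE \<omega> in M. u \<bullet> \<xi> \<omega> = 0" using g by (simp add: gaussian_vec_def)
    have m: "(\<lambda>\<omega>. (u \<bullet> \<xi> \<omega>)^k) \<in> borel_measurable M" using meas by measurable
    have ae2: "AE \<omega> in M. (u \<bullet> \<xi> \<omega>)^k = (0::real)^k" using ae by eventually_elim simp
    have i: "integrable M (\<lambda>\<omega>. (u \<bullet> \<xi> \<omega>)^k)"
      using integrable_cong_AE[OF m _ ae2] by simp
    have "expectation (\<lambda>\<omega>. (u \<bullet> \<xi> \<omega>)^k) = expectation (\<lambda>\<omega>. (0::real)^k)"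
      by (rule integral_cong_AE[OF m _ ae2]) simp
    also have "\<dots> = gm k (u \<bullet> (C *v u))"
      using True by (cases "k = 0") (auto simp: gm_def prob_space zero_power elim!: evenE)
    finally show ?thesis using i by simp
  next
    case False
    then have pos: "0 < u \<bullet> (C *v u)" using s0 by simp
    define \<sigma> where "\<sigma> = sqrt (u \<bullet> (C *v u))"
    have sp: "0 < \<sigma>" using pos by (simp add: \<sigma>_def)
    have D: "distributed M lborel (\<lambda>\<omega>. u \<bullet> \<xi> \<omega>) (normal_density 0 \<sigma>)"
      using g pos by (simp add: gaussian_vec_def \<sigma>_def)
    have int: "integrable M (\<lambda>\<omega>. (u \<bullet> \<xi> \<omega>)^k)"
      using distributed_integrable[OF D, of "\<lambda>x. x^k"] integrable_normal_moment[OF sp, of 0 k]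
      by simp
    have e: "expectation (\<lambda>\<omega>. (u \<bullet> \<xi> \<omega>)^k) = (\<integral>x. normal_density 0 \<sigma> x * x^k \<partial>lborel)"
      using distributed_integral[OF D, of "\<lambda>x. x^k"] by simp
    have "(\<integral>x. normal_density 0 \<sigma> x * x^k \<partial>lborel) = gm k (u \<bullet> (C *v u))"
    proof (cases "even k")
      case True
      then obtain j where k: "k = 2 * j" by (auto elim: evenE)
      have ss: "\<sigma>\<^sup>2 = u \<bullet> (C *v u)" using s0 by (simp add: \<sigma>_def)
      have "(\<integral>x. normal_density 0 \<sigma> x * x^k \<partial>lborel) = fact (2 * j) / ((2 / \<sigma>\<^sup>2)^j * fact j)"
        using integral_normal_moment_even[OF sp, of 0 j] k by simp
      also have "\<dots> = gm k (u \<bullet> (C *v u))"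
        using sp by (simp add: gm_def k ss[symmetric] field_simps power_divide)
      finally show ?thesis .
    next
      case False
      then obtain j where k: "k = 2 * j + 1" by (auto elim: oddE)
      show ?thesis using integral_normal_moment_odd[OF sp, of 0 j] k False by (simp add: gm_def)
    qed
    then show ?thesis using int e by simp
  qed
qed

definition mon :: "(real^'n) list \<Rightarrow> real^'n \<Rightarrow> real" where
  "mon us x = prod_list (map (\<lambda>u. u \<bullet> x) us)"

lemma mon_simps[simp]: "mon [] x = 1" "mon (u#us) x = (u \<bullet> x) * mon us x"
  "mon (us @ vs) x = mon us x * mon vs x"
  by (simp_all add: mon_def)

lemma mon_replicate[simp]: "mon (replicate i u) x = (u \<bullet> x)^i"
  by (induct i) auto

lemma mem_le_sum_list_real:
  fixes f :: "'b \<Rightarrow> real"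
  assumes "y \<in> set ys" "\<And>z. 0 \<le> f z"
  shows "f y \<le> sum_list (map f ys)"
  using assms(1)
proof (induct ys)
  case (Cons a ys)
  show ?case
  proof (cases "y = a")
    case True
    have "0 \<le> sum_list (map f ys)" using assms(2) by (induct ys) (auto intro: add_nonneg_nonneg)
    then show ?thesis using True by simp
  next
    case False
    then have "f y \<le> sum_list (map f ys)" using Cons by simp
    then show ?thesis using assms(2)[of a] by simp
  qed
qed simp

lemma abs_prod_list_bound:
  fixes ys :: "real list"
  shows "\<bar>prod_list ys\<bar> \<le> 1 + sum_list (map (\<lambda>y. \<bar>y\<bar>^length ys) ys)"
proof (cases "ys = []")
  case True then show ?thesis by simp
next
  case False
  define B where "B = Max (abs ` set ys)"
  have fin: "finite (abs ` set ys)" by simp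
  have ne: "abs ` set ys \<noteq> {}" using False by simp
  have Bin: "B \<in> abs ` set ys" unfolding B_def using Max_in[OF fin ne] .
  have le: "\<And>y. y \<in> set ys \<Longrightarrow> \<bar>y\<bar> \<le> B" unfolding B_def using fin by (intro Max_ge) auto
  have pa: "\<And>zs::real list. \<bar>prod_list zs\<bar> = prod_list (map abs zs)"
    by (induct_tac zs) (simp_all add: abs_mult)
  have nn: "\<And>zs::real list. 0 \<le> prod_list (map abs zs)"
    by (induct_tac zs) simp_all
  have pb: "\<And>zs. set zs \<subseteq> set ys \<Longrightarrow> prod_list (map abs zs) \<le> B ^ length zs"
  proof -
    fix zs :: "real list"
    show "set zs \<subseteq> set ys \<Longrightarrow> prod_list (map abs zs) \<le> B ^ length zs"
    proof (induct zs)
      case (Cons a zs)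
      have a: "a \<in> set ys" "set zs \<subseteq> set ys" using Cons.prems by auto
      have B0: "0 \<le> B" using le[OF a(1)] by linarith
      have "\<bar>a\<bar> * prod_list (map abs zs) \<le> B * B ^ length zs"
        by (rule mult_mono[OF le[OF a(1)] Cons.hyps[OF a(2)] B0 nn])
      then show ?case by simp
    qed simp
  qed
  obtain y where y: "y \<in> set ys" "B = \<bar>y\<bar>" using Bin by auto
  have "B ^ length ys \<le> sum_list (map (\<lambda>y. \<bar>y\<bar>^length ys) ys)"
    using mem_le_sum_list_real[OF y(1), of "\<lambda>y. \<bar>y\<bar>^length ys"] y(2) by simp
  moreover have "prod_list (map abs ys) \<le> B ^ length ys" using pb[of ys] by simp
  ultimately show ?thesis using pa[of ys] by linarith
qed

locale gset =
  fixes M :: "'a measure" and \<xi> :: "'a \<Rightarrow> real^'n" and C :: "real^'n^'n"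
  assumes g: "gaussian_vec M \<xi> C" and p: "psd C"
begin

sublocale prob_space M using g by (simp add: gaussian_vec_def)

lemma meas[measurable]: "\<xi> \<in> borel_measurable M" using g by (simp add: gaussian_vec_def)

lemma Csym: "transpose C = C" using p by (simp add: psd_def)

lemma Csym_inner: "w \<bullet> (C *v v) = v \<bullet> (C *v w)"
proof -
  have "w \<bullet> (C *v v) = (w v* C) \<bullet> v" by (simp add: dot_lmul_matrix)
  also have "w v* C = transpose C *v w" by simp
  finally show ?thesis using Csym by (simp add: inner_commute)
qed

lemma mom: "integrable M (\<lambda>\<omega>. (u \<bullet> \<xi> \<omega>)^k)"
   "expectation (\<lambda>\<omega>. (u \<bullet> \<xi> \<omega>)^k) = gm k (u \<bullet> (C *v u))"
  using gauss_mom[OF g p] by auto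

lemma mon_meas[measurable]: "(\<lambda>\<omega>. mon us (\<xi> \<omega>)) \<in> borel_measurable M"
  by (induct us) auto

lemma mon_int: "integrable M (\<lambda>\<omega>. mon us (\<xi> \<omega>))"
proof (rule Bochner_Integration.integrable_bound)
  let ?n = "length us"
  show "integrable M (\<lambda>\<omega>. 1 + (\<Sum>u\<leftarrow>us. \<bar>u \<bullet> \<xi> \<omega>\<bar>^?n))"
  proof (intro Bochner_Integration.integrable_add)
    show "integrable M (\<lambda>\<omega>. 1::real)" by simp
    have i: "\<And>u. integrable M (\<lambda>\<omega>. \<bar>u \<bullet> \<xi> \<omega>\<bar>^?n)"
      using integrable_abs[OF mom(1)] by (simp add: power_abs)
    have "\<And>vs. integrable M (\<lambda>\<omega>. (\<Sum>u\<leftarrow>vs. \<bar>u \<bullet> \<xi> \<omega>\<bar>^?n))"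
    proof -
      fix vs show "integrable M (\<lambda>\<omega>. (\<Sum>u\<leftarrow>vs. \<bar>u \<bullet> \<xi> \<omega>\<bar>^?n))"
        by (induct vs) (auto intro!: Bochner_Integration.integrable_add i)
    qed
    then show "integrable M (\<lambda>\<omega>. (\<Sum>u\<leftarrow>us. \<bar>u \<bullet> \<xi> \<omega>\<bar>^?n))" .
  qed
  show "(\<lambda>\<omega>. mon us (\<xi> \<omega>)) \<in> borel_measurable M" by measurable
  show "AE \<omega> in M. norm (mon us (\<xi> \<omega>)) \<le> norm (1 + (\<Sum>u\<leftarrow>us. \<bar>u \<bullet> \<xi> \<omega>\<bar>^?n))"
  proof (rule AE_I2)
    fix \<omega>
    have "norm (mon us (\<xi> \<omega>)) \<le> 1 + (\<Sum>y\<leftarrow>map (\<lambda>u. u \<bullet> \<xi> \<omega>) us. \<bar>y\<bar>^?n)"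
      using abs_prod_list_bound[of "map (\<lambda>u. u \<bullet> \<xi> \<omega>) us"] by (simp add: mon_def)
    also have "\<dots> = 1 + (\<Sum>u\<leftarrow>us. \<bar>u \<bullet> \<xi> \<omega>\<bar>^?n)"
      by (simp only: map_map o_def)
    also have "\<dots> \<le> norm (1 + (\<Sum>u\<leftarrow>us. \<bar>u \<bullet> \<xi> \<omega>\<bar>^?n))"
      unfolding real_norm_def by (rule abs_ge_self)
    finally show "norm (mon us (\<xi> \<omega>)) \<le> norm (1 + (\<Sum>u\<leftarrow>us. \<bar>u \<bullet> \<xi> \<omega>\<bar>^?n))" .
  qed
qed

lemma pow2_int: "integrable M (\<lambda>\<omega>. (v \<bullet> \<xi> \<omega>)^i * (w \<bullet> \<xi> \<omega>)^j)"
  using mon_int[of "replicate i v @ replicate j w"] by simp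

end

context gset begin

lemma quad_expand: "(w + t *\<^sub>R v) \<bullet> (C *v (w + t *\<^sub>R v)) =
   w \<bullet> (C *v w) + t * (2 * (v \<bullet> (C *v w))) + t^2 * (v \<bullet> (C *v v))"
proof -
  have "(w + t *\<^sub>R v) \<bullet> (C *v (w + t *\<^sub>R v)) =
     w \<bullet> (C *v w) + t * (w \<bullet> (C *v v)) + t * (v \<bullet> (C *v w)) + t * t * (v \<bullet> (C *v v))"
    by (simp add: matrix_vector_right_distrib matrix_vector_mult_scaleR inner_add_left inner_add_right
        algebra_simps)
  then show ?thesis using Csym_inner[of w v] by (simp add: power2_eq_square algebra_simps)
qed

lemma stein1:
  "expectation (\<lambda>\<omega>. (v \<bullet> \<xi> \<omega>) * (w \<bullet> \<xi> \<omega>)^m)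
     = of_nat m * (v \<bullet> (C *v w)) * gm (m - 1) (w \<bullet> (C *v w))"
proof -
  define n where "n = Suc m"
  define c where "c i = of_nat (n choose i) * expectation (\<lambda>\<omega>. (v \<bullet> \<xi> \<omega>)^i * (w \<bullet> \<xi> \<omega>)^(n-i))" for i
  define a where "a = w \<bullet> (C *v w)"
  define b where "b = v \<bullet> (C *v w)"
  define d where "d = v \<bullet> (C *v v)"
  have eq: "(\<Sum>i\<le>n. c i * t^i) = gm n (a + t * (2*b) + t^2 * d)" for t
  proof -
    have pt: "((w + t *\<^sub>R v) \<bullet> x)^n = (\<Sum>i\<le>n. (of_nat (n choose i) * t^i) * ((v \<bullet> x)^i * (w \<bullet> x)^(n-i)))" for x
      using binomial_ring[of "t * (v \<bullet> x)" "w \<bullet> x" n]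
      by (simp add: inner_add_left add.commute power_mult_distrib mult_ac)
    have "gm n (a + t * (2*b) + t^2 * d) = expectation (\<lambda>\<omega>. ((w + t *\<^sub>R v) \<bullet> \<xi> \<omega>)^n)"
      using mom(2)[of "w + t *\<^sub>R v" n] quad_expand[of w t v] by (simp add: a_def b_def d_def)
    also have "\<dots> = expectation (\<lambda>\<omega>. \<Sum>i\<le>n. (of_nat (n choose i) * t^i) * ((v \<bullet> \<xi> \<omega>)^i * (w \<bullet> \<xi> \<omega>)^(n-i)))"
      by (simp only: pt)
    also have "\<dots> = (\<Sum>i\<le>n. expectation (\<lambda>\<omega>. (of_nat (n choose i) * t^i) * ((v \<bullet> \<xi> \<omega>)^i * (w \<bullet> \<xi> \<omega>)^(n-i))))"
      by (rule Bochner_Integration.integral_sum, rule Bochner_Integration.integrable_mult_right, rule pow2_int)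
    also have "\<dots> = (\<Sum>i\<le>n. c i * t^i)"
      by (simp add: c_def mult_ac)
    finally show ?thesis by simp
  qed
  have d1: "((\<lambda>t. \<Sum>i\<le>n. c i * t^i) has_field_derivative (\<Sum>i\<le>n. of_nat i * 0^(i - Suc 0) * c i)) (at 0)"
    by (rule derivative_eq_intros refl | simp)+
  have s1: "(\<Sum>i\<le>n. of_nat i * (0::real)^(i - Suc 0) * c i) = c 1"
  proof -
    have "(\<Sum>i\<le>n. of_nat i * (0::real)^(i - Suc 0) * c i) = (\<Sum>i\<le>m. of_nat (Suc i) * (0::real)^i * c (Suc i))"
      unfolding n_def by (subst sum.atMost_Suc_shift) simp
    also have "\<dots> = (\<Sum>i\<le>m. if i = 0 then c 1 else 0)"
      by (rule sum.cong) auto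
    finally show ?thesis by simp
  qed
  have c1: "c 1 = of_nat n * expectation (\<lambda>\<omega>. (v \<bullet> \<xi> \<omega>) * (w \<bullet> \<xi> \<omega>)^m)"
    by (simp add: c_def n_def)
  show ?thesis
  proof (cases "even n")
    case False
    have "((\<lambda>t. gm n (a + t * (2*b) + t^2 * d)) has_field_derivative 0) (at 0)"
      using False by (simp add: gm_def)
    then have "c 1 = 0" using DERIV_unique[OF d1] s1 eq by (simp add: fun_eq_iff)
    moreover have "of_nat m * (v \<bullet> (C *v w)) * gm (m - 1) (w \<bullet> (C *v w)) = 0"
      using False by (cases m) (auto simp: gm_def n_def)
    ultimately show ?thesis using c1 by (simp add: n_def)
  next
    case True
    then have "odd m" by (simp add: n_def)
    then obtain r where "m = 2 * r + 1" by (auto elim: oddE)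
    then have n2: "n = 2 * Suc r" by (simp add: n_def)
    have m: "m = Suc (2 * r)" using n2 n_def by simp
    define K where "K = fact n / (2^(n div 2) * fact (n div 2) :: real)"
    have G: "gm n s = K * s^(Suc r)" for s using True n2 by (simp add: gm_def K_def)
    have "((\<lambda>t. K * (a + t * (2*b) + t^2 * d)^(Suc r)) has_field_derivative
           K * (of_nat (Suc r) * (a + 0 * (2*b) + 0^2 * d)^r * (2*b + 2 * 0 * d))) (at 0)"
      by (rule derivative_eq_intros refl | simp)+
    then have "c 1 = K * (of_nat (Suc r) * a^r * (2*b))"
      using DERIV_unique[OF d1] s1 eq G by (simp add: fun_eq_iff)
    then have e: "of_nat n * expectation (\<lambda>\<omega>. (v \<bullet> \<xi> \<omega>) * (w \<bullet> \<xi> \<omega>)^m) = K * (of_nat (Suc r) * a^r * (2*b))"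
      using c1 by simp
    have gmv: "gm (m - 1) a = fact (2*r) / (2^r * fact r) * a^r" using m by (simp add: gm_def)
    have nz: "real n \<noteq> 0" using n2 by simp
    have E: "expectation (\<lambda>\<omega>. (v \<bullet> \<xi> \<omega>) * (w \<bullet> \<xi> \<omega>)^m) = K * (of_nat (Suc r) * a^r * (2*b)) / real n"
      using e nz by (simp add: field_simps)
    have Kv: "K = (real (2*r+2) * real (2*r+1) * fact (2*r)) / (2 * 2^r * (real (Suc r) * fact r))"
      unfolding K_def n2 by (simp add: fact_Suc algebra_simps)
    have "K * (of_nat (Suc r) * a^r * (2*b)) / real n = of_nat m * b * (fact (2*r) / (2^r * fact r) * a^r)"
    proof -
      have f0: "(fact r :: real) \<noteq> 0" by simp
      have p0: "(2::real)^r \<noteq> 0" by simp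
      have r0: "real r + 1 \<noteq> 0" by linarith
      have r2: "2 * real r + 2 \<noteq> 0" by linarith
      have h: "\<And>G P y F A b::real. G \<noteq> 0 \<Longrightarrow> P \<noteq> 0 \<Longrightarrow> y \<noteq> 0 \<Longrightarrow>
        ((2*y) * (2*y-1) * F / (2 * P * (y * G))) * (y * A * (2*b)) / (2*y)
         = (2*y-1) * b * (F / (P * G) * A)"
        by (simp add: field_simps)
      have Kv2: "K = (2*(real r+1)) * (2*(real r+1)-1) * fact (2*r) / (2 * 2^r * ((real r+1) * fact r))"
        unfolding Kv by (simp add: algebra_simps)
      have nv: "real (2 * Suc r) = 2*(real r+1)" by simp
      have mv: "real (Suc (2*r)) = 2*(real r+1)-1" by simp
      show ?thesis unfolding Kv2 n2 m nv mv of_nat_Suc using h[OF f0 p0 r0, of "fact (2*r)" "a^r" b]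
        by (simp add: algebra_simps)
    qed
    then show ?thesis using E gmv by (simp add: a_def b_def)
  qed
qed

end

fun spol :: "(real \<Rightarrow> real) \<Rightarrow> real \<Rightarrow> real list \<Rightarrow> real" where
  "spol f c [] = f c"
| "spol f c (y#ys) = spol f (c + y) ys - spol f c ys"

lemma spol_shift0: "spol (\<lambda>z. f (y + z)) c ys = spol f (y + c) ys"
  by (induct ys arbitrary: c) (simp_all add: add_ac)

lemma spol_shift: "spol f (c + y) ys = spol (\<lambda>z. f (y + z)) c ys"
  unfolding spol_shift0 by (simp add: add.commute)

lemma spol_sum: "finite J \<Longrightarrow> spol (\<lambda>z. \<Sum>j\<in>J. g j z) c ys = (\<Sum>j\<in>J. spol (g j) c ys)"
  by (induct ys arbitrary: c) (simp_all add: sum_subtractf)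

lemma spol_scale: "spol (\<lambda>z. a * f z) c ys = a * spol f c ys"
  by (induct ys arbitrary: c) (simp_all add: right_diff_distrib)

lemma spol_const: "spol (\<lambda>z. a) c (y#ys) = 0"
proof -
  have "\<And>c. spol (\<lambda>z. a) c ys = (if ys = [] then a else 0)" by (induct ys) auto
  then show ?thesis by simp
qed

lemma spol_power: "k \<le> length ys \<Longrightarrow>
   spol (\<lambda>z. z^k) c ys = (if k = length ys then fact k * prod_list ys else 0)"
proof (induct ys arbitrary: c k)
  case Nil then show ?case by simp
next
  case (Cons y ys)
  show ?case
  proof (cases k)
    case 0 then show ?thesis using spol_const[of 1 c y ys] by simp
  next
    case (Suc k')
    have kl: "k' \<le> length ys" using Cons.prems Suc by simp
    have bin: "(y + z)^k = (\<Sum>j\<le>k. of_nat (k choose j) * y^j * z^(k-j))" for z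
      by (rule binomial_ring)
    have "spol (\<lambda>z. z^k) c (y#ys) = spol (\<lambda>z. (y+z)^k) c ys - spol (\<lambda>z. z^k) c ys"
      by (simp add: spol_shift)
    also have "spol (\<lambda>z. (y+z)^k) c ys = (\<Sum>j\<le>k. of_nat (k choose j) * y^j * spol (\<lambda>z. z^(k-j)) c ys)"
      unfolding bin by (simp add: spol_sum spol_scale)
    also have "\<dots> = spol (\<lambda>z. z^k) c ys + (\<Sum>j\<le>k'. of_nat (k choose Suc j) * y^Suc j * spol (\<lambda>z. z^(k'-j)) c ys)"
      unfolding Suc by (subst sum.atMost_Suc_shift) simp
    also have "(\<Sum>j\<le>k'. of_nat (k choose Suc j) * y^Suc j * spol (\<lambda>z. z^(k'-j)) c ys)
       = (\<Sum>j\<le>k'. if j = 0 then (if k' = length ys then of_nat k * y * (fact k' * prod_list ys) else 0) else 0)"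
    proof (rule sum.cong[OF refl])
      fix j assume j: "j \<in> {..k'}"
      have "k' - j \<le> length ys" using kl by simp
      then have e: "spol (\<lambda>z. z^(k'-j)) c ys = (if k' - j = length ys then fact (k'-j) * prod_list ys else 0)"
        using Cons.hyps by blast
      show "of_nat (k choose Suc j) * y^Suc j * spol (\<lambda>z. z^(k'-j)) c ys
         = (if j = 0 then (if k' = length ys then of_nat k * y * (fact k' * prod_list ys) else 0) else 0)"
        using j kl unfolding e by (auto simp: Suc)
    qed
    also have "\<dots> = (if k' = length ys then of_nat k * y * (fact k' * prod_list ys) else 0)"
      by simp
    finally show ?thesis using Suc by (simp add: algebra_simps)
  qed
qed

fun ppol :: "(real \<Rightarrow> real \<Rightarrow> real) \<Rightarrow> real \<Rightarrow> real \<Rightarrow> (real \<times> real) list \<Rightarrow> real" where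
  "ppol f cd cy [] = f cd cy"
| "ppol f cd cy (p#L) = ppol f (cd + fst p) (cy + snd p) L - ppol f cd cy L"

fun dsum :: "(real \<times> real) list \<Rightarrow> real" where
  "dsum [] = 0"
| "dsum (p#L) = fst p * prod_list (map snd L) + snd p * dsum L"

lemma ppol_shift0: "ppol (\<lambda>a z. f (d + a) (y + z)) cd cy L = ppol f (d + cd) (y + cy) L"
  by (induct L arbitrary: cd cy) (simp_all add: add_ac)

lemma ppol_shift: "ppol f (cd + d) (cy + y) L = ppol (\<lambda>a z. f (d + a) (y + z)) cd cy L"
  unfolding ppol_shift0 by (simp add: add.commute)

lemma ppol_sum: "finite J \<Longrightarrow> ppol (\<lambda>a z. \<Sum>j\<in>J. g j a z) cd cy L = (\<Sum>j\<in>J. ppol (g j) cd cy L)"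
  by (induct L arbitrary: cd cy) (simp_all add: sum_subtractf)

lemma ppol_scale: "ppol (\<lambda>a z. b * f a z) cd cy L = b * ppol f cd cy L"
  by (induct L arbitrary: cd cy) (simp_all add: right_diff_distrib)

lemma ppol_add: "ppol (\<lambda>a z. f a z + g a z) cd cy L = ppol f cd cy L + ppol g cd cy L"
  by (induct L arbitrary: cd cy) simp_all

lemma ppol_nod: "ppol (\<lambda>a z. f z) cd cy L = spol f cy (map snd L)"
  by (induct L arbitrary: cd cy) simp_all

lemma ppol_power: "Suc k \<le> length L \<Longrightarrow>
   ppol (\<lambda>a z. a * z^k) cd cy L = (if Suc k = length L then fact k * dsum L else 0)"
proof (induct L arbitrary: cd cy k)
  case Nil then show ?case by simp
next
  case (Cons p L)
  obtain d0 y0 where p: "p = (d0, y0)" by force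
  have kl: "k \<le> length L" using Cons.prems by simp
  have "ppol (\<lambda>a z. a * z^k) cd cy (p#L) = ppol (\<lambda>a z. (d0 + a) * (y0 + z)^k) cd cy L - ppol (\<lambda>a z. a * z^k) cd cy L"
    by (simp add: p ppol_shift)
  also have "ppol (\<lambda>a z. (d0 + a) * (y0 + z)^k) cd cy L
      = d0 * spol (\<lambda>z. (y0 + z)^k) cy (map snd L) + ppol (\<lambda>a z. a * (y0 + z)^k) cd cy L"
    by (simp add: distrib_right ppol_add ppol_scale ppol_nod spol_scale)
  also have "spol (\<lambda>z. (y0 + z)^k) cy (map snd L) = (if k = length L then fact k * prod_list (map snd L) else 0)"
    using spol_power[of k "map snd L" "cy + y0"] kl by (simp add: spol_shift)
  also have "ppol (\<lambda>a z. a * (y0 + z)^k) cd cy L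
      = (\<Sum>j\<le>k. of_nat (k choose j) * y0^j * ppol (\<lambda>a z. a * z^(k-j)) cd cy L)"
  proof -
    have "(\<lambda>a z. a * (y0 + z)^k) = (\<lambda>a z. \<Sum>j\<le>k. of_nat (k choose j) * y0^j * (a * z^(k-j)))"
      by (simp add: binomial_ring sum_distrib_left mult_ac)
    then show ?thesis by (simp add: ppol_sum ppol_scale)
  qed
  finally have e: "ppol (\<lambda>a z. a * z^k) cd cy (p#L) =
      d0 * (if k = length L then fact k * prod_list (map snd L) else 0)
      + (\<Sum>j\<le>k. of_nat (k choose j) * y0^j * ppol (\<lambda>a z. a * z^(k-j)) cd cy L)
      - ppol (\<lambda>a z. a * z^k) cd cy L" .
  show ?case
  proof (cases k)
    case 0
    then show ?thesis using e by (cases L) (auto simp: p)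
  next
    case (Suc k')
    have "(\<Sum>j\<le>k. of_nat (k choose j) * y0^j * ppol (\<lambda>a z. a * z^(k-j)) cd cy L)
       = ppol (\<lambda>a z. a * z^k) cd cy L + (\<Sum>j\<le>k'. of_nat (k choose Suc j) * y0^Suc j * ppol (\<lambda>a z. a * z^(k'-j)) cd cy L)"
      unfolding Suc by (subst sum.atMost_Suc_shift) simp
    also have "(\<Sum>j\<le>k'. of_nat (k choose Suc j) * y0^Suc j * ppol (\<lambda>a z. a * z^(k'-j)) cd cy L)
       = (\<Sum>j\<le>k'. if j = 0 then (if k = length L then of_nat k * y0 * (fact k' * dsum L) else 0) else 0)"
    proof (rule sum.cong[OF refl])
      fix j assume j: "j \<in> {..k'}"
      have "Suc (k' - j) \<le> length L" using kl Suc j by simp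
      then have e: "ppol (\<lambda>a z. a * z^(k'-j)) cd cy L = (if Suc (k' - j) = length L then fact (k'-j) * dsum L else 0)"
        using Cons.hyps by blast
      show "of_nat (k choose Suc j) * y0^Suc j * ppol (\<lambda>a z. a * z^(k'-j)) cd cy L
         = (if j = 0 then (if k = length L then of_nat k * y0 * (fact k' * dsum L) else 0) else 0)"
        using j kl unfolding e by (auto simp: Suc)
    qed
    also have "\<dots> = (if k = length L then of_nat k * y0 * (fact k' * dsum L) else 0)" by simp
    finally have sv: "(\<Sum>j\<le>k. of_nat (k choose j) * y0^j * ppol (\<lambda>a z. a * z^(k-j)) cd cy L)
       = ppol (\<lambda>a z. a * z^k) cd cy L + (if k = length L then of_nat k * y0 * (fact k' * dsum L) else 0)" .
    have fk: "of_nat k * fact k' = (fact k :: real)" using Suc by simp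
    have "ppol (\<lambda>a z. a * z^k) cd cy (p#L) = d0 * (if k = length L then fact k * prod_list (map snd L) else 0)
       + (if k = length L then fact k * y0 * dsum L else 0)"
      using e sv fk by (cases "k = length L") (simp_all add: algebra_simps)
    then show ?thesis using fk by (cases "k = length L") (simp_all add: p algebra_simps)
  qed
qed

fun vpol :: "(real^'n \<Rightarrow> real) \<Rightarrow> real^'n \<Rightarrow> (real^'n) list \<Rightarrow> real" where
  "vpol F w0 [] = F w0"
| "vpol F w0 (u#us) = vpol F (w0 + u) us - vpol F w0 us"

lemma vpol_s: "vpol (\<lambda>w. f (w \<bullet> x)) w0 us = spol f (w0 \<bullet> x) (map (\<lambda>u. u \<bullet> x) us)"
  by (induct us arbitrary: w0) (simp_all add: inner_add_left)

lemma vpol_p: "vpol (\<lambda>w. g (a \<bullet> w) (w \<bullet> x)) w0 us = ppol g (a \<bullet> w0) (w0 \<bullet> x) (map (\<lambda>u. (a \<bullet> u, u \<bullet> x)) us)"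
  by (induct us arbitrary: w0) (simp_all add: inner_add_left inner_add_right)

lemma vpol_scale: "vpol (\<lambda>w. c * F w) w0 us = c * vpol F w0 us"
  by (induct us arbitrary: w0) (simp_all add: right_diff_distrib)

type_synonym 'n plist = "(real \<times> (real^'n) list) list"

definition peval :: "'n plist \<Rightarrow> real^'n \<Rightarrow> real" where
  "peval L x = sum_list (map (\<lambda>(c,us). c * mon us x) L)"

lemma peval_simps[simp]: "peval [] x = 0" "peval ((c,us)#L) x = c * mon us x + peval L x"
  "peval (L1 @ L2) x = peval L1 x + peval L2 x"
  by (simp_all add: peval_def)

lemma peval_consmap: "peval (map (\<lambda>(c,vs). (c, u#vs)) L) x = (u \<bullet> x) * peval L x"
  by (induct L) (auto simp: algebra_simps)

fun dmon :: "real^'n \<Rightarrow> (real^'n) list \<Rightarrow> 'n plist" where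
  "dmon h [] = []"
| "dmon h (u#us) = (u \<bullet> h, us) # map (\<lambda>(c,vs). (c, u#vs)) (dmon h us)"

lemma dmon_eval: "peval (dmon h us) x = dsum (map (\<lambda>u. (u \<bullet> h, u \<bullet> x)) us)"
  by (induct us) (simp_all add: peval_consmap mon_def o_def)

context gset begin

lemma vpol_E: assumes "\<And>w. integrable M (F w)"
  shows "integrable M (\<lambda>\<omega>. vpol (\<lambda>w. F w \<omega>) w0 us) \<and>
    expectation (\<lambda>\<omega>. vpol (\<lambda>w. F w \<omega>) w0 us) = vpol (\<lambda>w. expectation (F w)) w0 us"
  by (induct us arbitrary: w0) (simp_all add: assms)

lemma peval_int: "integrable M (\<lambda>\<omega>. peval L (\<xi> \<omega>))"
  by (induct L) (auto intro!: mon_int Bochner_Integration.integrable_add Bochner_Integration.integrable_mult_right)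

lemma stein_mon: "expectation (\<lambda>\<omega>. (v \<bullet> \<xi> \<omega>) * mon us (\<xi> \<omega>))
    = expectation (\<lambda>\<omega>. peval (dmon (C *v v) us) (\<xi> \<omega>))"
proof (cases us)
  case Nil
  then show ?thesis using stein1[of v v 0] by simp
next
  case (Cons u0 us0)
  define m where "m = length us"
  define k where "k = length us0"
  have mk: "m = Suc k" using Cons by (simp add: m_def k_def)
  define a where "a = C *v v"
  have P1: "mon us x * fact m = vpol (\<lambda>w. (w \<bullet> x)^m) 0 us" for x
    using spol_power[of m "map (\<lambda>u. u \<bullet> x) us" 0] unfolding vpol_s[of "\<lambda>z. z^m"]
    by (simp add: m_def mon_def)
  have P2: "vpol (\<lambda>w. (a \<bullet> w) * (w \<bullet> x)^k) 0 us = fact k * peval (dmon a us) x" for x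
  proof -
    have me: "map (\<lambda>u. (u \<bullet> a, u \<bullet> x)) us = map (\<lambda>u. (a \<bullet> u, u \<bullet> x)) us"
      by (simp add: inner_commute)
    show ?thesis
      using ppol_power[of k "map (\<lambda>u. (a \<bullet> u, u \<bullet> x)) us" 0 0] mk unfolding vpol_p[of "\<lambda>d z. d * z^k"]
      by (simp add: dmon_eval m_def me)
  qed
  have int1: "integrable M (\<lambda>\<omega>. (v \<bullet> \<xi> \<omega>) * (w \<bullet> \<xi> \<omega>)^m)" for w
    using pow2_int[of v 1 w m] by simp
  have int2: "integrable M (\<lambda>\<omega>. (a \<bullet> w) * (w \<bullet> \<xi> \<omega>)^k)" for w
    using mom(1)[of w k] by simp
  have aw: "a \<bullet> w = v \<bullet> (C *v w)" for w
    using Csym_inner[of w v] by (simp add: a_def inner_commute)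
  have "fact m * expectation (\<lambda>\<omega>. (v \<bullet> \<xi> \<omega>) * mon us (\<xi> \<omega>))
      = expectation (\<lambda>\<omega>. vpol (\<lambda>w. (v \<bullet> \<xi> \<omega>) * (w \<bullet> \<xi> \<omega>)^m) 0 us)"
    by (simp add: vpol_scale P1[symmetric] mult_ac)
  also have "\<dots> = vpol (\<lambda>w. expectation (\<lambda>\<omega>. (v \<bullet> \<xi> \<omega>) * (w \<bullet> \<xi> \<omega>)^m)) 0 us"
    using vpol_E[of "\<lambda>w \<omega>. (v \<bullet> \<xi> \<omega>) * (w \<bullet> \<xi> \<omega>)^m", OF int1] by simp
  also have "\<dots> = vpol (\<lambda>w. of_nat m * expectation (\<lambda>\<omega>. (a \<bullet> w) * (w \<bullet> \<xi> \<omega>)^k)) 0 us"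
  proof -
    have "expectation (\<lambda>\<omega>. (v \<bullet> \<xi> \<omega>) * (w \<bullet> \<xi> \<omega>)^m) = of_nat m * expectation (\<lambda>\<omega>. (a \<bullet> w) * (w \<bullet> \<xi> \<omega>)^k)" for w
      using stein1[of v w m] mom(2)[of w k] aw[of w] mk by simp
    then show ?thesis by simp
  qed
  also have "\<dots> = of_nat m * expectation (\<lambda>\<omega>. vpol (\<lambda>w. (a \<bullet> w) * (w \<bullet> \<xi> \<omega>)^k) 0 us)"
    using vpol_E[of "\<lambda>w \<omega>. (a \<bullet> w) * (w \<bullet> \<xi> \<omega>)^k", OF int2] by (simp add: vpol_scale)
  also have "\<dots> = of_nat m * fact k * expectation (\<lambda>\<omega>. peval (dmon a us) (\<xi> \<omega>))"
    by (simp add: P2)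
  also have "of_nat m * fact k = (fact m :: real)" using mk by simp
  finally show ?thesis by (simp add: a_def)
qed

end

definition dpoly :: "real^'n \<Rightarrow> 'n plist \<Rightarrow> 'n plist" where
  "dpoly h L = concat (map (\<lambda>(c,us). map (\<lambda>(d,vs). (c*d, vs)) (dmon h us)) L)"

lemma peval_scalemap: "peval (map (\<lambda>(d,vs). (c*d, vs)) L) x = c * peval L x"
  by (induct L) (auto simp: algebra_simps)

lemma dpoly_simps[simp]: "dpoly h [] = []"
  "dpoly h ((c,us)#L) = map (\<lambda>(d,vs). (c*d, vs)) (dmon h us) @ dpoly h L"
  "dpoly h (L1 @ L2) = dpoly h L1 @ dpoly h L2"
  by (simp_all add: dpoly_def)

lemma peval_dpoly_cons: "peval (dpoly h ((c,us)#L)) x = c * peval (dmon h us) x + peval (dpoly h L) x"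
  by (simp add: peval_scalemap)

definition pmul :: "'n plist \<Rightarrow> 'n plist \<Rightarrow> 'n plist" where
  "pmul L1 L2 = concat (map (\<lambda>(c1,u1). map (\<lambda>(c2,u2). (c1*c2, u1@u2)) L2) L1)"

lemma pmul_simps[simp]: "pmul [] L2 = []"
  "pmul ((c1,u1)#L1) L2 = map (\<lambda>(c2,u2). (c1*c2, u1@u2)) L2 @ pmul L1 L2"
  by (simp_all add: pmul_def)

lemma peval_pmul_aux: "peval (map (\<lambda>(c2,u2). (c1*c2, u1@u2)) L2) x = c1 * mon u1 x * peval L2 x"
  by (induct L2) (auto simp: algebra_simps)

lemma peval_pmul[simp]: "peval (pmul L1 L2) x = peval L1 x * peval L2 x"
  by (induct L1) (auto simp: peval_pmul_aux algebra_simps)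

lemma dmon_append: "peval (dmon h (us1 @ us2)) x = peval (dmon h us1) x * mon us2 x + mon us1 x * peval (dmon h us2) x"
  by (induct us1) (simp_all add: peval_consmap algebra_simps)

lemma dpoly_pmul_aux: "peval (dpoly h (map (\<lambda>(c2,u2). (c1*c2, u1@u2)) L2)) x
   = c1 * peval (dmon h u1) x * peval L2 x + c1 * mon u1 x * peval (dpoly h L2) x"
proof (induct L2)
  case (Cons p L2)
  obtain c2 u2 where p: "p = (c2,u2)" by force
  have "peval (dpoly h (map (\<lambda>(c2,u2). (c1*c2, u1@u2)) (p#L2))) x
     = (c1*c2) * peval (dmon h (u1@u2)) x + peval (dpoly h (map (\<lambda>(c2,u2). (c1*c2, u1@u2)) L2)) x"
    by (simp add: p peval_scalemap)
  moreover have "peval (p#L2) x = c2 * mon u2 x + peval L2 x" by (simp add: p)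
  moreover have "peval (dpoly h (p#L2)) x = c2 * peval (dmon h u2) x + peval (dpoly h L2) x"
    by (simp only: p peval_dpoly_cons)
  ultimately show ?case unfolding dmon_append Cons.hyps by (simp add: algebra_simps)
qed simp

lemma dpoly_pmul: "peval (dpoly h (pmul L1 L2)) x = peval (dpoly h L1) x * peval L2 x + peval L1 x * peval (dpoly h L2) x"
  by (induct L1) (auto simp: dpoly_pmul_aux peval_scalemap algebra_simps)

fun ppow :: "'n plist \<Rightarrow> nat \<Rightarrow> 'n plist" where
  "ppow G 0 = [(1, [])]"
| "ppow G (Suc k) = pmul G (ppow G k)"

lemma peval_ppow[simp]: "peval (ppow G k) x = (peval G x)^k"
  by (induct k) auto

lemma dpoly_ppow: "peval (dpoly h (ppow G k)) x = of_nat k * (peval G x)^(k - 1) * peval (dpoly h G) x"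
proof (induct k)
  case 0 then show ?case by (simp add: peval_scalemap)
next
  case (Suc k) then show ?case
    by (cases k) (simp_all add: dpoly_pmul algebra_simps)
qed

definition idx :: "'n::finite list" where
  "idx = (SOME xs. distinct xs \<and> set xs = UNIV)"

lemma idx: "distinct (idx :: 'n::finite list)" "set (idx :: 'n list) = UNIV"
proof -
  have "\<exists>xs::'n list. distinct xs \<and> set xs = UNIV" using finite_distinct_list[of "UNIV::'n set"] by auto
  then have "distinct (idx :: 'n list) \<and> set (idx :: 'n list) = UNIV"
    unfolding idx_def by (rule someI_ex)
  then show "distinct (idx :: 'n::finite list)" "set (idx :: 'n list) = UNIV" by auto
qed

lemma sum_list_idx: "sum_list (map f (idx :: 'n::finite list)) = (\<Sum>i\<in>UNIV. f i)"
proof -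
  have "sum_list (map f (idx :: 'n list)) = sum f (set (idx :: 'n list))"
    by (rule sum_list_distinct_conv_sum_set[OF idx(1)])
  also have "set (idx :: 'n list) = UNIV" by (rule idx(2))
  finally show ?thesis .
qed

definition qpoly :: "real^'n^'n \<Rightarrow> 'n plist" where
  "qpoly B = map (\<lambda>i. (1, [axis i 1, B $ i])) idx"

lemma mat_row: "(B *v x) $ i = (B $ i) \<bullet> (x :: real^'n)"
  by (simp add: matrix_vector_mult_def inner_vec_def mult_ac)

lemma peval_qpoly: fixes B :: "real^'n^'n" shows "peval (qpoly B) x = x \<bullet> (B *v x)"
proof -
  have "peval (qpoly B) x = (\<Sum>i\<in>UNIV. (axis i 1 \<bullet> x) * ((B $ i) \<bullet> x))"
    by (simp add: qpoly_def peval_def o_def sum_list_idx)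
  also have "\<dots> = (\<Sum>i\<in>UNIV. x $ i * (B *v x) $ i)"
    by (simp add: inner_axis' mat_row)
  also have "\<dots> = x \<bullet> (B *v x)"
    by (simp add: inner_vec_def)
  finally show ?thesis .
qed

lemma dpoly_qpoly: fixes B :: "real^'n^'n" shows "peval (dpoly h (qpoly B)) x = h \<bullet> (B *v x) + x \<bullet> (B *v h)"
proof -
  have "peval (dpoly h (qpoly B)) x = (\<Sum>i\<in>UNIV. (axis i 1 \<bullet> h) * ((B $ i) \<bullet> x) + ((B $ i) \<bullet> h) * (axis i 1 \<bullet> x))"
  proof -
    have "\<And>L. peval (dpoly h (map (\<lambda>i. (1, [axis i 1, B $ i])) L)) x
       = sum_list (map (\<lambda>i. (axis i 1 \<bullet> h) * ((B $ i) \<bullet> x) + ((B $ i) \<bullet> h) * (axis i 1 \<bullet> x)) L)"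
    proof -
      fix L :: "'n list" show "peval (dpoly h (map (\<lambda>i. (1, [axis i 1, B $ i])) L)) x
       = sum_list (map (\<lambda>i. (axis i 1 \<bullet> h) * ((B $ i) \<bullet> x) + ((B $ i) \<bullet> h) * (axis i 1 \<bullet> x)) L)"
        by (induct L) (simp_all add: peval_scalemap peval_consmap)
    qed
    then show ?thesis by (simp add: qpoly_def sum_list_idx)
  qed
  also have "\<dots> = (\<Sum>i\<in>UNIV. h $ i * (B *v x) $ i) + (\<Sum>i\<in>UNIV. x $ i * (B *v h) $ i)"
    by (simp add: inner_axis' mat_row sum.distrib mult_ac)
  also have "\<dots> = h \<bullet> (B *v x) + x \<bullet> (B *v h)"
    by (simp add: inner_vec_def)
  finally show ?thesis .
qed

context gset begin

lemma stein_poly: "expectation (\<lambda>\<omega>. (v \<bullet> \<xi> \<omega>) * peval L (\<xi> \<omega>))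
    = expectation (\<lambda>\<omega>. peval (dpoly (C *v v) L) (\<xi> \<omega>))"
proof (induct L)
  case Nil then show ?case by simp
next
  case (Cons p L)
  obtain c us where p: "p = (c, us)" by force
  have i1: "integrable M (\<lambda>\<omega>. c * ((v \<bullet> \<xi> \<omega>) * mon us (\<xi> \<omega>)))"
    using mon_int[of "v # us"] by simp
  have i2: "integrable M (\<lambda>\<omega>. (v \<bullet> \<xi> \<omega>) * peval L (\<xi> \<omega>))"
  proof -
    have "peval (pmul [(1,[v])] L) x = (v \<bullet> x) * peval L x" for x
      by (simp only: peval_pmul) simp
    then show ?thesis using peval_int[of "pmul [(1,[v])] L"] by simp
  qed
  have "expectation (\<lambda>\<omega>. (v \<bullet> \<xi> \<omega>) * peval (p#L) (\<xi> \<omega>))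
      = expectation (\<lambda>\<omega>. c * ((v \<bullet> \<xi> \<omega>) * mon us (\<xi> \<omega>)) + (v \<bullet> \<xi> \<omega>) * peval L (\<xi> \<omega>))"
    by (simp add: p algebra_simps)
  also have "\<dots> = c * expectation (\<lambda>\<omega>. (v \<bullet> \<xi> \<omega>) * mon us (\<xi> \<omega>)) + expectation (\<lambda>\<omega>. (v \<bullet> \<xi> \<omega>) * peval L (\<xi> \<omega>))"
    using i1 i2 by simp
  also have "\<dots> = c * expectation (\<lambda>\<omega>. peval (dmon (C *v v) us) (\<xi> \<omega>)) + expectation (\<lambda>\<omega>. peval (dpoly (C *v v) L) (\<xi> \<omega>))"
    using Cons stein_mon by simp
  also have "\<dots> = expectation (\<lambda>\<omega>. c * peval (dmon (C *v v) us) (\<xi> \<omega>) + peval (dpoly (C *v v) L) (\<xi> \<omega>))"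
    using peval_int[of "dmon (C *v v) us"] peval_int[of "dpoly (C *v v) L"] by simp
  also have "\<dots> = expectation (\<lambda>\<omega>. peval (dpoly (C *v v) (p#L)) (\<xi> \<omega>))"
    by (simp only: p peval_dpoly_cons)
  finally show ?case .
qed

end

lemma mv_inner: fixes M :: "real^'n^'n" shows "(M *v u) \<bullet> y = u \<bullet> (transpose M *v y)"
proof -
  have "M *v u = u v* transpose M" by (metis transpose_matrix_vector transpose_transpose)
  then show ?thesis by (simp only: dot_lmul_matrix)
qed

lemma trace_col: fixes B C :: "real^'n^'n"
  shows "(\<Sum>i\<in>UNIV. (B $ i) \<bullet> (C *v axis i 1)) = trace (B ** C)"
  by (simp add: trace_def matrix_vector_mult_basis column_def inner_vec_def matrix_matrix_mult_def)

context gset begin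

lemma int_lin: "integrable M (\<lambda>\<omega>. (v \<bullet> \<xi> \<omega>) * peval L (\<xi> \<omega>))"
proof -
  have "peval (pmul [(1,[v])] L) x = (v \<bullet> x) * peval L x" for x
    by (simp only: peval_pmul) simp
  then show ?thesis using peval_int[of "pmul [(1,[v])] L"] by simp
qed

lemma arec:
  assumes As: "transpose A = A"
  shows "expectation (\<lambda>\<omega>. (\<xi> \<omega> \<bullet> (B *v \<xi> \<omega>)) * (\<xi> \<omega> \<bullet> (A *v \<xi> \<omega>) - r)^k)
   = trace (B ** C) * expectation (\<lambda>\<omega>. (\<xi> \<omega> \<bullet> (A *v \<xi> \<omega>) - r)^k)
     + 2 * of_nat k * expectation (\<lambda>\<omega>. (\<xi> \<omega> \<bullet> ((transpose B ** C ** A) *v \<xi> \<omega>)) * (\<xi> \<omega> \<bullet> (A *v \<xi> \<omega>) - r)^(k - 1))"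
proof -
  define G where "G = qpoly A @ [(-r, [])]"
  have pG: "peval G x = x \<bullet> (A *v x) - r" for x by (simp add: G_def peval_qpoly)
  define g where "g i = pmul [(1,[B $ i])] (ppow G k)" for i
  define h where "h i = C *v axis i 1" for i
  define B' where "B' = transpose B ** C ** A"
  have pg: "peval (g i) x = (B $ i \<bullet> x) * (x \<bullet> (A *v x) - r)^k" for i x
    unfolding g_def peval_pmul peval_ppow by (simp add: pG)
  have dG: "peval (dpoly v G) x = 2 * (v \<bullet> (A *v x))" for v x
  proof -
    have "x \<bullet> (A *v v) = v \<bullet> (A *v x)" using mv_inner[of A x v] As by (simp add: inner_commute)
    then show ?thesis by (simp add: G_def dpoly_qpoly peval_scalemap)
  qed
  have dg: "peval (dpoly v (g i)) x = (B $ i \<bullet> v) * (x \<bullet> (A *v x) - r)^k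
       + (B $ i \<bullet> x) * (of_nat k * (x \<bullet> (A *v x) - r)^(k-1) * (2 * (v \<bullet> (A *v x))))" for v i x
    unfolding g_def dpoly_pmul dpoly_ppow dG by (simp add: pG peval_scalemap)
  have lhs: "(x \<bullet> (B *v x)) * (x \<bullet> (A *v x) - r)^k = (\<Sum>i\<in>UNIV. (axis i 1 \<bullet> x) * peval (g i) x)" for x
  proof -
    have "x \<bullet> (B *v x) = (\<Sum>i\<in>UNIV. x $ i * (B $ i \<bullet> x))" by (simp add: inner_vec_def mat_row)
    then show ?thesis by (simp add: pg inner_axis' sum_distrib_left mult_ac)
  qed
  have s1: "(\<Sum>i\<in>UNIV. B $ i \<bullet> h i) = trace (B ** C)" unfolding h_def by (rule trace_col)
  have s2: "(\<Sum>i\<in>UNIV. (B $ i \<bullet> x) * (h i \<bullet> y)) = x \<bullet> (B' *v x)" if "y = A *v x" for x y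
  proof -
    have "h i \<bullet> y = (C *v y) $ i" for i
      unfolding h_def mv_inner Csym by (simp add: inner_axis')
    then have "(\<Sum>i\<in>UNIV. (B $ i \<bullet> x) * (h i \<bullet> y)) = (B *v x) \<bullet> (C *v y)"
      by (simp add: inner_vec_def mat_row)
    also have "\<dots> = x \<bullet> (B' *v x)"
      unfolding mv_inner B'_def that by (simp add: matrix_vector_mul_assoc matrix_mul_assoc)
    finally show ?thesis .
  qed
  have rhs: "(\<Sum>i\<in>UNIV. peval (dpoly (h i) (g i)) x) =
     trace (B ** C) * (x \<bullet> (A *v x) - r)^k + 2 * of_nat k * ((x \<bullet> (B' *v x)) * (x \<bullet> (A *v x) - r)^(k-1))" for x
  proof -
    have "(\<Sum>i\<in>UNIV. peval (dpoly (h i) (g i)) x) =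
       (\<Sum>i\<in>UNIV. B $ i \<bullet> h i) * (x \<bullet> (A *v x) - r)^k
       + 2 * of_nat k * (x \<bullet> (A *v x) - r)^(k-1) * (\<Sum>i\<in>UNIV. (B $ i \<bullet> x) * (h i \<bullet> (A *v x)))"
      by (simp add: dg sum.distrib sum_distrib_left sum_distrib_right mult_ac)
    then show ?thesis using s1 s2[OF refl, of x] by (simp add: mult_ac)
  qed
  have "expectation (\<lambda>\<omega>. (\<xi> \<omega> \<bullet> (B *v \<xi> \<omega>)) * (\<xi> \<omega> \<bullet> (A *v \<xi> \<omega>) - r)^k)
      = expectation (\<lambda>\<omega>. \<Sum>i\<in>UNIV. (axis i 1 \<bullet> \<xi> \<omega>) * peval (g i) (\<xi> \<omega>))"
    by (simp only: lhs)
  also have "\<dots> = (\<Sum>i\<in>UNIV. expectation (\<lambda>\<omega>. (axis i 1 \<bullet> \<xi> \<omega>) * peval (g i) (\<xi> \<omega>)))"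
    by (rule Bochner_Integration.integral_sum) (rule int_lin)
  also have "\<dots> = (\<Sum>i\<in>UNIV. expectation (\<lambda>\<omega>. peval (dpoly (h i) (g i)) (\<xi> \<omega>)))"
    by (simp add: stein_poly h_def)
  also have "\<dots> = expectation (\<lambda>\<omega>. \<Sum>i\<in>UNIV. peval (dpoly (h i) (g i)) (\<xi> \<omega>))"
    by (rule Bochner_Integration.integral_sum[symmetric]) (rule peval_int)
  also have "\<dots> = expectation (\<lambda>\<omega>. trace (B ** C) * (\<xi> \<omega> \<bullet> (A *v \<xi> \<omega>) - r)^k
      + 2 * of_nat k * ((\<xi> \<omega> \<bullet> (B' *v \<xi> \<omega>)) * (\<xi> \<omega> \<bullet> (A *v \<xi> \<omega>) - r)^(k-1)))"
    by (simp only: rhs)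
  also have "\<dots> = trace (B ** C) * expectation (\<lambda>\<omega>. (\<xi> \<omega> \<bullet> (A *v \<xi> \<omega>) - r)^k)
      + 2 * of_nat k * expectation (\<lambda>\<omega>. (\<xi> \<omega> \<bullet> (B' *v \<xi> \<omega>)) * (\<xi> \<omega> \<bullet> (A *v \<xi> \<omega>) - r)^(k-1))"
  proof -
    have i1: "integrable M (\<lambda>\<omega>. (\<xi> \<omega> \<bullet> (A *v \<xi> \<omega>) - r)^k)"
      using peval_int[of "ppow G k"] by (simp add: pG)
    have i2: "integrable M (\<lambda>\<omega>. (\<xi> \<omega> \<bullet> (B' *v \<xi> \<omega>)) * (\<xi> \<omega> \<bullet> (A *v \<xi> \<omega>) - r)^(k-1))"
      using peval_int[of "pmul (qpoly B') (ppow G (k-1))"] by (simp add: pG peval_qpoly)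
    show ?thesis using i1 i2 by simp
  qed
  finally show ?thesis by (simp add: B'_def)
qed

end

definition Comp :: "nat \<Rightarrow> nat list set" where
  "Comp N = {k. (\<forall>x\<in>set k. 2 \<le> x) \<and> sum_list k = N}"

lemma len_le_sum: "(\<forall>x\<in>set k. (1::nat) \<le> x) \<Longrightarrow> length k \<le> sum_list k"
  by (induct k) auto

lemma Comp_len: "k \<in> Comp N \<Longrightarrow> length k \<le> N"
proof -
  assume "k \<in> Comp N"
  then have "\<forall>x\<in>set k. 1 \<le> x" "sum_list k = N" by (auto simp: Comp_def)
  then show ?thesis using len_le_sum[of k] by simp
qed

lemma finite_Comp: "finite (Comp N)"
proof (rule finite_subset[OF _ finite_lists_length_le[of "{..N}" N]])
  show "Comp N \<subseteq> {xs. set xs \<subseteq> {..N} \<and> length xs \<le> N}"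
    using Comp_len by (auto simp: Comp_def member_le_sum_list)
qed simp

definition Fall :: "real^'n^'n \<Rightarrow> real^'n^'n \<Rightarrow> nat \<Rightarrow> real" where
  "Fall A C N = (\<Sum>k\<in>Comp N. 2^(N - length k) * Rk A C k * cc N k)"

lemma Comp0: "Comp 0 = {[]}"
  by (auto simp: Comp_def) (metis list.exhaust numeral_le_iff semiring_norm(69) sum_list.Cons zero_le add_is_0 not_numeral_le_zero list.set_intros(1))

lemma Fall0: "Fall A C 0 = 1"
  by (simp add: Fall_def Comp0 Rk_def cc_def)

lemma psum_Cons: "i \<ge> 1 \<Longrightarrow> psum (j#k) i = j + psum k (i - 1)"
  by (cases i) (auto simp: psum_def)

lemma cc_Cons:
  assumes k: "k \<in> Comp n" and N: "N = j + n"
  shows "cc N (j#k) = fact (N - 1) / fact n * cc n k"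
proof (cases k)
  case Nil
  then have "n = 0" using k by (simp add: Comp_def)
  then show ?thesis using Nil N by (simp add: cc_def)
next
  case (Cons a k')
  define m' where "m' = length k"
  have m1: "1 \<le> m'" using Cons by (simp add: m'_def)
  have n1: "1 \<le> n" using k Cons by (auto simp: Comp_def)
  define P' where "P' = (\<Prod>i\<in>{2..m'}. (real n - real (psum k (i - 1))))"
  have "(\<Prod>i\<in>{2..length (j#k)}. (real N - real (psum (j#k) (i - 1))))
        = (real N - real (psum (j#k) (2 - 1))) * (\<Prod>i\<in>{Suc 2..Suc m'}. (real N - real (psum (j#k) (i - 1))))"
  proof -
    have l: "length (j#k) = Suc m'" by (simp add: m'_def)
    show ?thesis unfolding l by (rule prod.atLeast_Suc_atMost) (use m1 in simp)
  qed
  also have "(\<Prod>i\<in>{Suc 2..Suc m'}. (real N - real (psum (j#k) (i - 1)))) = (\<Prod>i\<in>{2..m'}. (real N - real (psum (j#k) i)))"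
    by (simp only: prod.shift_bounds_cl_Suc_ivl) simp
  also have "\<dots> = P'"
    unfolding P'_def by (rule prod.cong[OF refl]) (simp add: psum_Cons N)
  also have "real N - real (psum (j#k) (2 - 1)) = real n" by (simp add: psum_def N)
  finally have P: "(\<Prod>i\<in>{2..length (j#k)}. (real N - real (psum (j#k) (i - 1)))) = real n * P'" .
  have cn: "cc n k = fact (n - 1) / P'" by (simp add: cc_def P'_def m'_def)
  have fn: "fact n = real n * fact (n - 1)" using n1 by (metis fact_nonzero fact_num_eq_if of_nat_eq_0_iff Suc_pred' less_le_trans zero_less_one of_nat_fact fact_Suc order_le_less)
  show ?thesis
  proof -
    have n0: "real n \<noteq> 0" "(fact (n - 1) :: real) \<noteq> 0" using n1 by auto
    have "cc N (j#k) = fact (N - 1) / (real n * P')" unfolding cc_def P ..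
    then show ?thesis unfolding cn fn using n0 by (cases "P' = 0") (simp_all add: field_simps)
  qed
qed

lemma Comp_Suc: "Comp (Suc k) = (\<lambda>(i,c). (i+2) # c) ` (SIGMA i:{..<k}. Comp (k - Suc i))"
proof (intro equalityI subsetI)
  fix x assume x: "x \<in> Comp (Suc k)"
  then obtain j c where xc: "x = j # c" by (cases x) (auto simp: Comp_def)
  have j2: "2 \<le> j" and cs: "\<forall>y\<in>set c. 2 \<le> y" and sm: "j + sum_list c = Suc k"
    using x xc by (auto simp: Comp_def)
  have "c \<in> Comp (k - Suc (j - 2))" using cs sm j2 by (auto simp: Comp_def)
  moreover have "j - 2 < k" using sm j2 by simp
  ultimately show "x \<in> (\<lambda>(i,c). (i+2) # c) ` (SIGMA i:{..<k}. Comp (k - Suc i))"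
    using xc j2 by (auto intro!: image_eqI[where x="(j - 2, c)"])
next
  fix x assume "x \<in> (\<lambda>(i,c). (i+2) # c) ` (SIGMA i:{..<k}. Comp (k - Suc i))"
  then obtain i c where "i < k" "c \<in> Comp (k - Suc i)" "x = (i+2) # c" by auto
  then show "x \<in> Comp (Suc k)" by (auto simp: Comp_def)
qed

lemma Fall_Suc: "Fall A C (Suc k) =
   (\<Sum>i<k. 2^(Suc i) * (fact k / fact (k - Suc i)) * R A C (i+2) * Fall A C (k - Suc i))"
proof -
  have inj: "inj_on (\<lambda>(i,c). (i+2) # c) (SIGMA i:{..<k}. Comp (k - Suc i))"
    by (auto simp: inj_on_def)
  have "Fall A C (Suc k) = (\<Sum>(i,c)\<in>(SIGMA i:{..<k}. Comp (k - Suc i)).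
           2^(Suc k - length ((i+2)#c)) * Rk A C ((i+2)#c) * cc (Suc k) ((i+2)#c))"
    unfolding Fall_def Comp_Suc by (subst sum.reindex[OF inj]) (simp add: split_def)
  also have "\<dots> = (\<Sum>i<k. \<Sum>c\<in>Comp (k - Suc i).
           2^(Suc k - length ((i+2)#c)) * Rk A C ((i+2)#c) * cc (Suc k) ((i+2)#c))"
    by (rule sum.Sigma[symmetric]) (auto simp: finite_Comp)
  also have "\<dots> = (\<Sum>i<k. \<Sum>c\<in>Comp (k - Suc i).
           2^(Suc i) * (fact k / fact (k - Suc i)) * R A C (i+2) * (2^(k - Suc i - length c) * Rk A C c * cc (k - Suc i) c))"
  proof (intro sum.cong refl)
    fix i c assume i: "i \<in> {..<k}" and c: "c \<in> Comp (k - Suc i)"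
    have l: "length c \<le> k - Suc i" using Comp_len[OF c] .
    have p2: "(2::real)^(Suc k - length ((i+2)#c)) = 2^(Suc i) * 2^(k - Suc i - length c)"
    proof -
      have e: "Suc k - length ((i+2)#c) = Suc i + (k - Suc i - length c)" using l i by simp
      show ?thesis by (simp only: e power_add)
    qed
    have rk: "Rk A C ((i+2)#c) = R A C (i+2) * Rk A C c"
      by (simp only: Rk_def length_Cons prod.lessThan_Suc_shift) simp
    have cc: "cc (Suc k) ((i+2)#c) = fact k / fact (k - Suc i) * cc (k - Suc i) c"
      using cc_Cons[OF c, of "Suc k" "i+2"] i by simp
    show "2^(Suc k - length ((i+2)#c)) * Rk A C ((i+2)#c) * cc (Suc k) ((i+2)#c)
       = 2^(Suc i) * (fact k / fact (k - Suc i)) * R A C (i+2) * (2^(k - Suc i - length c) * Rk A C c * cc (k - Suc i) c)"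
      unfolding p2 rk cc by (simp add: mult_ac)
  qed
  also have "\<dots> = (\<Sum>i<k. 2^(Suc i) * (fact k / fact (k - Suc i)) * R A C (i+2) * Fall A C (k - Suc i))"
    by (simp add: Fall_def sum_distrib_left)
  finally show ?thesis .
qed

lemma Fall_eq: assumes N: "N \<ge> 1"
  shows "(\<Sum>m=1..N. 2 ^ (N - m) * (\<Sum>k\<in>J0 m N. Rk A C k * cc N k)) = Fall A C N"
proof -
  have "(\<Sum>m=1..N. 2 ^ (N - m) * (\<Sum>k\<in>J0 m N. Rk A C k * cc N k))
     = (\<Sum>m=1..N. \<Sum>k\<in>J0 m N. 2^(N - length k) * Rk A C k * cc N k)"
    by (intro sum.cong refl) (auto simp: sum_distrib_left J0_def mult_ac)
  also have "\<dots> = (\<Sum>k\<in>(\<Union>m\<in>{1..N}. J0 m N). 2^(N - length k) * Rk A C k * cc N k)"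
  proof (rule sum.UNION_disjoint[symmetric])
    show "finite {1..N}" by simp
    show "\<forall>m\<in>{1..N}. finite (J0 m N)"
      using finite_Comp[of N] by (auto intro: finite_subset simp: J0_def Comp_def)
    show "\<forall>m\<in>{1..N}. \<forall>m'\<in>{1..N}. m \<noteq> m' \<longrightarrow> J0 m N \<inter> J0 m' N = {}"
      by (auto simp: J0_def)
  qed
  also have "(\<Union>m\<in>{1..N}. J0 m N) = Comp N"
  proof (intro equalityI subsetI)
    fix k assume "k \<in> (\<Union>m\<in>{1..N}. J0 m N)" then show "k \<in> Comp N"
      by (auto simp: J0_def Comp_def)
  next
    fix k assume k: "k \<in> Comp N"
    have "length k \<le> N" using Comp_len[OF k] .
    moreover have "k \<noteq> []" using k N by (auto simp: Comp_def)
    then have "1 \<le> length k" by (cases k) auto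
    ultimately show "k \<in> (\<Union>m\<in>{1..N}. J0 m N)" using k
      by (auto simp: J0_def Comp_def intro!: bexI[where x="length k"])
  qed
  finally show ?thesis by (simp add: Fall_def)
qed

lemma mat_pow_comm: "mat_pow M j ** M = M ** mat_pow M j"
proof (induct j)
  case (Suc j)
  have "mat_pow M (Suc j) ** M = M ** (mat_pow M j ** M)" by (simp add: matrix_mul_assoc)
  also have "\<dots> = M ** mat_pow M (Suc j)" using Suc by simp
  finally show ?case .
qed simp

lemma mat_pow_Suc': "mat_pow M (Suc j) = mat_pow M j ** M"
  by (simp add: mat_pow_comm)

lemma transpose_mat_pow: "transpose (mat_pow M j) = mat_pow (transpose M) j"
  by (induct j) (simp_all add: matrix_transpose_mul mat_pow_comm)

lemma AC_pow: "A ** mat_pow (C ** A) j = mat_pow (A ** C) j ** A"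
proof (induct j)
  case (Suc j)
  have "A ** mat_pow (C ** A) (Suc j) = (A ** C) ** (A ** mat_pow (C ** A) j)" by (simp add: matrix_mul_assoc)
  also have "\<dots> = (A ** C) ** (mat_pow (A ** C) j ** A)" using Suc by simp
  also have "\<dots> = mat_pow (A ** C) (Suc j) ** A" by (simp add: matrix_mul_assoc)
  finally show ?case .
qed simp

definition bm :: "real^'n^'n \<Rightarrow> real^'n^'n \<Rightarrow> nat \<Rightarrow> real^'n^'n" where
  "bm A C j = mat_pow (A ** C) j ** A"

lemma bm_0: "bm A C 0 = A" by (simp add: bm_def)

lemma bm_trace: "trace (bm A C j ** C) = R A C (Suc j)"
  unfolding bm_def R_def mat_pow_Suc' by (simp only: matrix_mul_assoc)

lemma bm_next: assumes "transpose A = A" "transpose C = C"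
  shows "transpose (bm A C j) ** C ** A = bm A C (Suc j)"
proof -
  have "transpose (bm A C j) = A ** mat_pow (C ** A) j"
    using assms by (simp add: bm_def matrix_transpose_mul transpose_mat_pow)
  also have "\<dots> = bm A C j" by (simp add: bm_def AC_pow)
  finally have t: "transpose (bm A C j) = bm A C j" .
  show ?thesis unfolding t unfolding bm_def mat_pow_Suc' by (simp only: matrix_mul_assoc)
qed

context gset begin

lemma closed_form:
  fixes r :: real
  assumes As: "transpose A = A"
  defines "\<mu> \<equiv> \<lambda>k. expectation (\<lambda>\<omega>. (\<xi> \<omega> \<bullet> (A *v \<xi> \<omega>) - r)^k)"
  shows "expectation (\<lambda>\<omega>. (\<xi> \<omega> \<bullet> (bm A C j *v \<xi> \<omega>)) * (\<xi> \<omega> \<bullet> (A *v \<xi> \<omega>) - r)^k)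
     = (\<Sum>i\<le>k. 2^i * (fact k / fact (k - i)) * R A C (j + i + 1) * \<mu> (k - i))"
proof (induct k arbitrary: j)
  case 0
  show ?case using arec[OF As, of "bm A C j" r 0] by (simp add: bm_trace \<mu>_def)
next
  case (Suc k)
  have "expectation (\<lambda>\<omega>. (\<xi> \<omega> \<bullet> (bm A C j *v \<xi> \<omega>)) * (\<xi> \<omega> \<bullet> (A *v \<xi> \<omega>) - r)^Suc k)
      = R A C (Suc j) * \<mu> (Suc k) + 2 * of_nat (Suc k) *
        (\<Sum>i\<le>k. 2^i * (fact k / fact (k - i)) * R A C (Suc j + i + 1) * \<mu> (k - i))"
    using arec[OF As, of "bm A C j" r "Suc k"] Suc[of "Suc j"]
    by (simp add: bm_trace \<mu>_def bm_next[OF As Csym])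
  also have "\<dots> = (\<Sum>i\<le>Suc k. 2^i * (fact (Suc k) / fact (Suc k - i)) * R A C (j + i + 1) * \<mu> (Suc k - i))"
  proof -
    have fp: "(0::real) < fact k + fact k * real k" by (simp add: add_pos_nonneg)
    show ?thesis using fp by (subst sum.atMost_Suc_shift) (simp add: sum_distrib_left algebra_simps)
  qed
  finally show ?case .
qed

lemma mu_rec:
  assumes As: "transpose A = A"
  defines "\<mu> \<equiv> \<lambda>k. expectation (\<lambda>\<omega>. (\<xi> \<omega> \<bullet> (A *v \<xi> \<omega>) - R A C 1)^k)"
  shows "\<mu> (Suc k) = (\<Sum>i<k. 2^(Suc i) * (fact k / fact (k - Suc i)) * R A C (i+2) * \<mu> (k - Suc i))"
proof -
  let ?r = "R A C 1"
  have i1: "integrable M (\<lambda>\<omega>. (\<xi> \<omega> \<bullet> (A *v \<xi> \<omega>)) * (\<xi> \<omega> \<bullet> (A *v \<xi> \<omega>) - ?r)^k)"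
    using peval_int[of "pmul (qpoly A) (ppow (qpoly A @ [(-?r, [])]) k)"] by (simp add: peval_qpoly)
  have i2: "integrable M (\<lambda>\<omega>. (\<xi> \<omega> \<bullet> (A *v \<xi> \<omega>) - ?r)^k)"
    using peval_int[of "ppow (qpoly A @ [(-?r, [])]) k"] by (simp add: peval_qpoly)
  have "\<mu> (Suc k) = expectation (\<lambda>\<omega>. (\<xi> \<omega> \<bullet> (A *v \<xi> \<omega>)) * (\<xi> \<omega> \<bullet> (A *v \<xi> \<omega>) - ?r)^k
          - ?r * (\<xi> \<omega> \<bullet> (A *v \<xi> \<omega>) - ?r)^k)"
    by (simp add: \<mu>_def algebra_simps)
  also have "\<dots> = expectation (\<lambda>\<omega>. (\<xi> \<omega> \<bullet> (bm A C 0 *v \<xi> \<omega>)) * (\<xi> \<omega> \<bullet> (A *v \<xi> \<omega>) - ?r)^k) - ?r * \<mu> k"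
    using i1 i2 by (simp add: \<mu>_def bm_0)
  also have "\<dots> = (\<Sum>i\<le>k. 2^i * (fact k / fact (k - i)) * R A C (i + 1) * \<mu> (k - i)) - ?r * \<mu> k"
    using closed_form[OF As, where r = "?r" and j = 0 and k = k] by (simp add: \<mu>_def)
  also have "\<dots> = (\<Sum>i<k. 2^(Suc i) * (fact k / fact (k - Suc i)) * R A C (i+2) * \<mu> (k - Suc i))"
    by (subst sum.atMost_shift) (simp add: numeral_2_eq_2)
  finally show ?thesis .
qed

end

theorem lemmaL7:
  fixes A C :: "real^'n^'n" and M :: "'a measure" and \<xi> :: "'a \<Rightarrow> real^'n" and N :: nat
  assumes "transpose A = A"
    and "psd C"
    and "gaussian_vec M \<xi> C"
    and "N \<ge> 1"
  shows "prob_space.expectation M (\<lambda>\<omega>. (\<xi> \<omega> \<bullet> (A *v \<xi> \<omega>) - R A C 1) ^ N)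
       = (\<Sum>m=1..N. 2 ^ (N - m) * (\<Sum>k\<in>J0 m N. Rk A C k * cc N k))"
proof -
  interpret gset M \<xi> C using assms(2,3) by unfold_locales
  define \<mu> where "\<mu> = (\<lambda>k. expectation (\<lambda>\<omega>. (\<xi> \<omega> \<bullet> (A *v \<xi> \<omega>) - R A C 1)^k))"
  have "\<mu> n = Fall A C n" for n
  proof (induct n rule: less_induct)
    case (less n)
    show ?case
    proof (cases n)
      case 0 then show ?thesis by (simp add: \<mu>_def Fall0 prob_space)
    next
      case (Suc k)
      have "\<mu> n = (\<Sum>i<k. 2^(Suc i) * (fact k / fact (k - Suc i)) * R A C (i+2) * \<mu> (k - Suc i))"
        unfolding Suc \<mu>_def by (rule mu_rec[OF assms(1)])
      also have "\<dots> = (\<Sum>i<k. 2^(Suc i) * (fact k / fact (k - Suc i)) * R A C (i+2) * Fall A C (k - Suc i))"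
        by (intro sum.cong refl) (simp add: less Suc)
      also have "\<dots> = Fall A C n" by (simp add: Suc Fall_Suc)
      finally show ?thesis .
    qed
  qed
  then show ?thesis using Fall_eq[OF assms(4), of A C] by (simp add: \<mu>_def)
qed

end
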